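(* For every prime power $q$ there exists a linear $(2,\Phi(q),q)$-AONT, i.e. an invertible $\Phi(q)\times\Phi(q)$ matrix over $\mathbb{F}_q$ all of whose $2\times2$ submatrices are invertible.
   Context: $\Phi$ denotes Euler's totient function, so $\Phi(p^r)=p^r-p^{r-1}$. A linear $(t,s,q)$-AONT over $\mathbb{F}_q$ is given by an invertible $s\times s$ matrix $M$ over $\mathbb{F}_q$ (the transform being $(y_1,\dots,y_s)=(x_1,\dots,x_s)M^{-1}$); $M$ defines a linear $(t,s,q)$-AONT iff every $t\times t$ submatrix of $M$ is invertible. *)

theory Defs
  imports "Jordan_Normal_Form.Matrix" "Jordan_Normal_Form.DL_Submatrix" "HOL-Number_Theory.Totient"
begin

definition linear_AONT_matrix :: "nat \<Rightarrow> nat \<Rightarrow> 'a::field mat \<Rightarrow> bool" where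
  "linear_AONT_matrix t s M \<longleftrightarrow>
     M \<in> carrier_mat s s \<and> invertible_mat M \<and>
     (\<forall>I J. I \<subseteq> {..<s} \<and> J \<subseteq> {..<s} \<and> card I = t \<and> card J = t
            \<longrightarrow> invertible_mat (submatrix M I J))"

end

theory Submission
  imports Defs "Jordan_Normal_Form.Determinant" "HOL-Computational_Algebra.Polynomial"
begin

lemma ff_pow_card:
  fixes x :: "'a :: {finite,field}"
  shows "x ^ card (UNIV :: 'a set) = x"
proof (cases "x = 0")
  case False
  have "x * (\<Prod>y\<in>UNIV-{0}. x * y) = x * x ^ (card (UNIV :: 'a set) - 1) * \<Prod>(UNIV-{0})"
    by (simp add: prod.distrib mult_ac)
  also have "x * x ^ (card (UNIV :: 'a set) - 1) = x ^ Suc (card (UNIV :: 'a set) - 1)"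
    by (subst power_Suc) auto
  also have "Suc (card (UNIV :: 'a set) - 1) = card (UNIV :: 'a set)"
    using finite_UNIV_card_ge_0[where ?'a = 'a] by simp
  also have "(\<Prod>y\<in>UNIV-{0}. x * y) = (\<Prod>y\<in>UNIV-{0}. y)"
    by (rule prod.reindex_bij_witness[of _ "\<lambda>y. y / x" "\<lambda>y. x * y"]) (use False in auto)
  finally show ?thesis
    by simp
qed (use finite_UNIV_card_ge_0[where ?'a = 'a] in auto)

lemma ff_prime_CHAR: "prime CHAR('a :: {finite,field})"
  by (rule prime_CHAR_semidom) (simp add: finite_imp_CHAR_pos)

lemma ff_card_ge2: "card (UNIV :: 'a :: {finite,field} set) \<ge> 2"
proof -
  have "{0, 1::'a} \<subseteq> UNIV" by simp
  then have "card {0, 1::'a} \<le> card (UNIV :: 'a set)" by (intro card_mono) auto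
  then show ?thesis by simp
qed

lemma of_nat_ne0_small:
  assumes "0 < k" "k < CHAR('a :: {finite,field})"
  shows "(of_nat k :: 'a) \<noteq> 0"
  using assms by (auto simp: of_nat_eq_0_iff_char_dvd dest: dvd_imp_le)

lemma of_nat_mod_CHAR': "(of_nat (n mod CHAR('a :: {finite,field})) :: 'a) = of_nat n"
  by (simp add: of_nat_eq_iff_cong_CHAR cong_def)

lemma of_nat_inverse_in:
  fixes x :: "'a :: {finite,field}"
  assumes "(of_nat d :: 'a) \<noteq> 0"
  shows "x = of_nat (d ^ (card (UNIV::'a set) - 2)) * (of_nat d * x)"
proof -
  let ?q = "card (UNIV::'a set)"
  let ?c = "of_nat d :: 'a"
  have q2: "?q \<ge> 2" by (rule ff_card_ge2)
  have "?c ^ ?q = ?c" by (rule ff_pow_card)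
  obtain k where k: "?q = Suc (Suc k)" using q2 by (metis add_2_eq_Suc le_Suc_ex)
  have "?c ^ ?q = ?c * (?c ^ k * ?c)" unfolding k by (simp add: power_Suc2)
  then have "?c * (?c ^ k * ?c) = ?c" using \<open>?c ^ ?q = ?c\<close> by simp
  then have "?c * (?c ^ k * ?c) = ?c * 1" by simp
  then have "?c ^ k * ?c = 1" using assms by (metis mult_left_cancel)
  moreover have "?q - 2 = k" using k by simp
  ultimately show ?thesis by (simp add: of_nat_power mult.assoc[symmetric])
qed

lemma card_pow_aux:
  fixes V :: "'a :: {finite,field} set"
  assumes "0 \<in> V" "\<forall>x\<in>V. \<forall>y\<in>V. x + y \<in> V"
  shows "\<exists>r. card (UNIV::'a set) = card V * CHAR('a) ^ r"
  using assms
proof (induction "card (UNIV - V)" arbitrary: V rule: less_induct)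
  case less
  show ?case
  proof (cases "V = UNIV")
    case True then show ?thesis by (intro exI[of _ 0]) simp
  next
    case False
    then obtain x where x: "x \<notin> V" by blast
    define p where "p = CHAR('a)"
    have pp: "prime p" unfolding p_def by (rule ff_prime_CHAR)
    then have p2: "p \<ge> 2" by (simp add: prime_ge_2_nat)
    have multc: "of_nat k * v \<in> V" if "v \<in> V" for k v
    proof (induction k)
      case 0 then show ?case using less.prems by simp
    next
      case (Suc k) then show ?case using less.prems that by (simp add: distrib_right)
    qed
    have negc: "- v \<in> V" if "v \<in> V" for v
    proof -
      obtain p' where p': "p = Suc p'" using p2 by (cases p) auto
      have "of_nat (p - 1) * v + v = of_nat p * v"
        unfolding p' by (simp add: algebra_simps)
      also have "\<dots> = 0" by (simp add: p_def)
      finally have "- v = of_nat (p - 1) * v" by (metis add.commute add_eq_0_iff)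
      then show ?thesis using multc[OF that] by simp
    qed
    have key: "x \<in> V" if "v1 \<in> V" "v2 \<in> V" "k2 < k1" "k1 < p"
        "v1 + of_nat k1 * x = v2 + of_nat k2 * x" for v1 v2 k1 k2
    proof -
      define d where "d = k1 - k2"
      have "of_nat k1 = (of_nat d + of_nat k2 :: 'a)" using that(3) by (simp add: d_def)
      then have "of_nat d * x = v2 + - v1" using that(5) by (simp add: algebra_simps eq_diff_eq)
      moreover have "v2 + - v1 \<in> V" using less.prems(2) that(2) negc[OF that(1)] by blast
      ultimately have y: "of_nat d * x \<in> V" by simp
      have "0 < d" "d < CHAR('a)" using that by (auto simp: d_def p_def)
      then have "(of_nat d :: 'a) \<noteq> 0" by (rule of_nat_ne0_small)
      then have "x = of_nat (d ^ (card (UNIV::'a set) - 2)) * (of_nat d * x)" by (rule of_nat_inverse_in)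
      then show ?thesis using multc[OF y] by metis
    qed
    define f where "f = (\<lambda>(v, k). v + of_nat k * x)"
    define V' where "V' = f ` (V \<times> {..<p})"
    have inj: "inj_on f (V \<times> {..<p})"
    proof (rule inj_onI, clarify)
      fix v1 k1 v2 k2 assume a: "v1 \<in> V" "k1 < p" "v2 \<in> V" "k2 < p" "f (v1, k1) = f (v2, k2)"
      then have e: "v1 + of_nat k1 * x = v2 + of_nat k2 * x" by (simp add: f_def)
      have "k1 = k2"
      proof (rule ccontr)
        assume "k1 \<noteq> k2"
        then consider "k2 < k1" | "k1 < k2" by linarith
        then show False
        proof cases
          case 1 then show False using key[OF a(1) a(3) 1 a(2) e] x by simp
        next
          case 2 then show False using key[OF a(3) a(1) 2 a(4) e[symmetric]] x by simp
        qed
      qed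
      then show "v1 = v2 \<and> k1 = k2" using e by simp
    qed
    have cardV': "card V' = card V * p"
      unfolding V'_def by (simp add: card_image[OF inj] card_cartesian_product)
    have z: "0 \<in> V'" unfolding V'_def f_def using less.prems p2
      by (intro image_eqI[of _ _ "(0,0)"]) auto
    have cl: "\<forall>a\<in>V'. \<forall>b\<in>V'. a + b \<in> V'"
    proof (intro ballI)
      fix a b assume "a \<in> V'" "b \<in> V'"
      then obtain v1 k1 v2 k2 where ab: "v1 \<in> V" "v2 \<in> V" "a = v1 + of_nat k1 * x" "b = v2 + of_nat k2 * x"
        unfolding V'_def f_def by auto
      have "a + b = (v1 + v2) + of_nat ((k1 + k2) mod p) * x"
        using ab by (simp add: of_nat_mod_CHAR' p_def algebra_simps)
      moreover have "(k1 + k2) mod p < p" using p2 by simp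
      moreover have "v1 + v2 \<in> V" using less.prems ab by simp
      ultimately show "a + b \<in> V'" unfolding V'_def f_def
        by (intro image_eqI[of _ _ "(v1 + v2, (k1 + k2) mod p)"]) auto
    qed
    have sub: "UNIV - V' \<subset> UNIV - V"
    proof -
      have "V \<subseteq> V'" unfolding V'_def f_def using p2
        by (auto intro!: image_eqI[of _ _ "(_, 0)"])
      moreover have "x \<in> V'" unfolding V'_def f_def using p2 less.prems
        by (intro image_eqI[of _ _ "(0, 1)"]) auto
      ultimately show ?thesis using x by blast
    qed
    have "card (UNIV - V') < card (UNIV - V)" by (rule psubset_card_mono) (use sub in auto)
    from less.hyps[OF this z cl] obtain r where "card (UNIV::'a set) = card V' * p ^ r"
      by (auto simp: p_def)
    then have "card (UNIV::'a set) = card V * CHAR('a) ^ Suc r" by (simp add: cardV' p_def)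
    then show ?thesis by blast
  qed
qed

lemma ff_card_prime_power: "\<exists>r. card (UNIV :: 'a :: {finite,field} set) = CHAR('a) ^ r"
  using card_pow_aux[of "{0::'a}"] by simp

lemma sum_lessThan_add_split:
  "(\<Sum>e<a + b. g e) = (\<Sum>e<a. g e) + (\<Sum>i<b. g (a + i))" for g :: "nat \<Rightarrow> 'a::comm_monoid_add"
  by (induction b) (simp_all add: add.assoc)

lemma block_sum:
  fixes f :: "nat \<Rightarrow> 'a::comm_ring_1"
  assumes m: "m > 0"
  shows "(\<Sum>e<k*m. f (e div m) * z^e) = (\<Sum>t<k. f t * (z^m)^t) * (\<Sum>i<m. z^i)"
proof (induction k)
  case 0 then show ?case by simp
next
  case (Suc k)
  have "(\<Sum>e<Suc k * m. f (e div m) * z^e) = (\<Sum>e<k*m + m. f (e div m) * z^e)"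
    by (simp add: add.commute)
  also have "\<dots> = (\<Sum>e<k*m. f (e div m) * z^e) + (\<Sum>i<m. f ((k*m + i) div m) * z^(k*m + i))"
    by (rule sum_lessThan_add_split)
  also have "(\<Sum>i<m. f ((k*m + i) div m) * z^(k*m + i)) = (\<Sum>i<m. (f k * (z^m)^k) * z^i)"
  proof (rule sum.cong)
    fix i assume "i \<in> {..<m}"
    then have d: "(k*m + i) div m = k" using m by simp
    have "z^(k*m + i) = (z^m)^k * z^i"
      by (simp only: power_add power_mult mult.commute[of k m])
    then show "f ((k*m + i) div m) * z^(k*m + i) = (f k * (z^m)^k) * z^i"
      by (simp only: d mult.assoc)
  qed simp
  also have "\<dots> = (f k * (z^m)^k) * (\<Sum>i<m. z^i)" by (simp only: sum_distrib_left)
  finally show ?case using Suc by (simp only: sum.lessThan_Suc distrib_right)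
qed

lemma arith_geo:
  fixes y :: "'a::comm_ring_1"
  shows "(y - 1) * (\<Sum>t<n. of_nat (t+1) * y^t) = of_nat n * y^n - (\<Sum>t<n. y^t)"
  by (induction n) (simp_all add: algebra_simps)

lemma gauss_nat: "2 * (\<Sum>t<n. t + 1) = n * (n + 1::nat)"
  by (induction n) (simp_all add: algebra_simps)

lemma key_identity:
  fixes z :: "'a::{finite,field}"
  assumes p: "p = CHAR('a)" and q: "card (UNIV::'a set) = m * p" and m: "m > 0" and z: "z \<noteq> 0"
    and cond: "(of_nat m::'a) = 0 \<or> p \<noteq> 2"
  shows "(\<Sum>e<(p-1)*m. of_nat (e div m + 1) * z^e) = - inverse (z^m - 1)"
proof -
  have pp: "prime p" using p ff_prime_CHAR by simp
  then have p2: "p \<ge> 2" by (simp add: prime_ge_2_nat)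
  define y where "y = z^m"
  define P where "P = (\<Sum>i<m. z^i)"
  define R where "R = (\<Sum>t<p-1. of_nat (t+1) * y^t :: 'a)"
  have S: "(\<Sum>e<(p-1)*m. of_nat (e div m + 1) * z^e) = R * P"
    unfolding R_def P_def y_def using block_sum[OF m, where f="\<lambda>t. of_nat (t+1)" and k="p-1" and z=z] by simp
  have ofp: "(of_nat p :: 'a) = 0" using p by simp
  show ?thesis
  proof (cases "z = 1")
    case True
    have y1: "y = 1" using True by (simp add: y_def)
    have P1: "P = of_nat m" using True by (simp add: P_def)
    have "R * P = 0"
    proof (cases "(of_nat m::'a) = 0")
      case True then show ?thesis using P1 by simp
    next
      case False
      with cond have pn2: "p \<noteq> 2" by simp
      have R1: "R = of_nat (\<Sum>t<p-1. t + 1)" unfolding R_def y1 by simp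
      have "(2::'a) * R = of_nat (2 * (\<Sum>t<p-1. t + 1))" unfolding R1 by simp
      also have "\<dots> = of_nat ((p - 1) * (p - 1 + 1))" by (simp only: gauss_nat)
      also have "\<dots> = 0" using p2 ofp by simp
      finally have "(2::'a) * R = 0" .
      moreover have "(2::'a) \<noteq> 0"
      proof
        assume "(2::'a) = 0"
        then have "(of_nat 2::'a) = 0" by simp
        then have "p dvd 2" using p by (simp only: of_nat_eq_0_iff_char_dvd)
        then show False using pn2 p2 by (simp add: dvd_imp_le le_antisym)
      qed
      ultimately show ?thesis by simp
    qed
    then show ?thesis using S True by simp
  next
    case False
    have h1: "(z - 1) * P = y - 1" unfolding P_def y_def by (simp add: power_diff_1_eq)
    have ofp1: "(of_nat (p - 1) :: 'a) = - 1"
    proof -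
      have "(of_nat (p - 1) :: 'a) + 1 = of_nat p" using p2 by (simp add: of_nat_diff)
      then show ?thesis using ofp by (simp add: eq_neg_iff_add_eq_0)
    qed
    have Gs: "(\<Sum>t<p. y^t) = (\<Sum>t<p-1. y^t) + y^(p-1)"
    proof -
      have "p = Suc (p - 1)" using p2 by simp
      then show ?thesis by (metis sum.lessThan_Suc)
    qed
    have h2: "(y - 1) * R = - (\<Sum>t<p. y^t)"
      unfolding R_def arith_geo ofp1 Gs by simp
    have yp: "y ^ p = z" unfolding y_def
      by (simp add: power_mult[symmetric] q[symmetric] ff_pow_card)
    have h3: "(y - 1) * (\<Sum>t<p. y^t) = z - 1"
      using power_diff_1_eq[of y p] yp by simp
    have "(z - 1) * (R * P) = R * ((z - 1) * P)" by (simp only: ac_simps)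
    also have "\<dots> = (y - 1) * R" by (subst h1) (rule mult.commute)
    finally have "(y - 1) * ((z - 1) * (R * P)) = (y - 1) * ((y - 1) * R)" by simp
    also have "\<dots> = - (z - 1)" using h2 h3 by simp
    finally have f: "(y - 1) * ((z - 1) * (R * P)) = - (z - 1)" .
    have "(z - 1) * ((y - 1) * (R * P) + 1) = (y - 1) * ((z - 1) * (R * P)) + (z - 1)"
      by (simp only: distrib_left mult.left_commute mult_1_right)
    also have "\<dots> = 0" using f by simp
    finally have "(z - 1) * ((y - 1) * (R * P) + 1) = 0" .
    then have "(y - 1) * (R * P) + 1 = 0" using False by simp
    then have e: "(y - 1) * (R * P) = - 1" by (simp add: eq_neg_iff_add_eq_0)
    then have y1: "y - 1 \<noteq> 0" by auto
    have "R * P = inverse (y - 1) * ((y - 1) * (R * P))" using y1 by simp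
    then have "R * P = - inverse (y - 1)" using e by simp
    then show ?thesis using S by (simp add: y_def)
  qed
qed

lemma helper_neg: "(a::'a::comm_ring_1) * (b * (c * (-1 - d))) = -(a * (b * (c * (1 + d))))"
  by (simp add: algebra_simps)

lemma entry_identity:
  fixes w v :: "'a::{finite,field}"
  assumes p: "p = CHAR('a)" and q: "card (UNIV::'a set) = m * p" and m: "m > 0"
    and w: "w \<noteq> 0" and v: "v \<noteq> 0"
    and cond: "(of_nat m::'a) = 0 \<or> p \<noteq> 2"
  shows "(\<Sum>e<(p-1)*m. w^e * (- of_nat (e div m + 1) * inverse v ^ (e+m))) = inverse (w^m - v^m)"
proof -
  define z where "z = w * inverse v"
  have z0: "z \<noteq> 0" using w v by (simp add: z_def)
  have "(\<Sum>e<(p-1)*m. w^e * (- of_nat (e div m + 1) * inverse v ^ (e+m)))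
      = (\<Sum>e<(p-1)*m. - (inverse v ^ m) * (of_nat (e div m + 1) * z^e))"
    by (rule sum.cong) (simp_all add: z_def power_add power_mult_distrib mult_ac helper_neg)
  also have "\<dots> = - (inverse v ^ m) * (\<Sum>e<(p-1)*m. of_nat (e div m + 1) * z^e)"
    by (simp add: sum_distrib_left)
  also have "\<dots> = inverse v ^ m * inverse (z^m - 1)"
    using key_identity[OF p q m z0 cond] by simp
  also have "\<dots> = inverse (v^m * (z^m - 1))"
    by (simp add: power_inverse inverse_mult_distrib)
  also have "v^m * (z^m - 1) = w^m - v^m"
  proof -
    have vz: "v * z = w" using v by (simp add: z_def field_simps)
    have "v^m * (z^m - 1) = (v * z)^m - v^m" by (simp add: power_mult_distrib algebra_simps)
    then show ?thesis using vz by simp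
  qed
  finally show ?thesis .
qed

lemma vand_det:
  fixes x :: "nat \<Rightarrow> 'a::field"
  assumes inj: "inj_on x {..<n}"
  shows "det (mat n n (\<lambda>(i,e). x i ^ e)) \<noteq> 0"
proof
  define V where "V = mat n n (\<lambda>(i,e). x i ^ e)"
  assume "det (mat n n (\<lambda>(i,e). x i ^ e)) = 0"
  then have "det V = 0" by (simp add: V_def)
  moreover have Vc: "V \<in> carrier_mat n n" by (simp add: V_def)
  ultimately obtain v where v: "v \<in> carrier_vec n" "v \<noteq> 0\<^sub>v n" "V *\<^sub>v v = 0\<^sub>v n"
    using det_0_iff_vec_prod_zero_field[OF Vc] by auto
  define P where "P = (\<Sum>e<n. monom (v $ e) e)"
  have cP: "coeff P k = (if k < n then v $ k else 0)" for k
    unfolding P_def by (simp add: coeff_sum coeff_monom)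
  have roots: "poly P (x i) = 0" if i: "i < n" for i
  proof -
    have "(V *\<^sub>v v) $ i = 0" using v(3) i by simp
    then have "(\<Sum>j\<in>{0..<n}. x i ^ j * v $ j) = 0"
      using i v(1) by (simp add: V_def scalar_prod_def)
    moreover have "poly P (x i) = (\<Sum>j<n. v $ j * x i ^ j)"
      unfolding P_def by (simp add: poly_sum poly_monom)
    ultimately show ?thesis by (simp add: atLeast0LessThan mult.commute)
  qed
  obtain k where k: "k < n" "v $ k \<noteq> 0"
  proof (rule ccontr)
    assume "\<not> thesis"
    then have "\<forall>k<n. v $ k = 0" using that by blast
    then have "v = 0\<^sub>v n" using v(1) by (intro eq_vecI) auto
    then show False using v(2) by simp
  qed
  have P0: "P \<noteq> 0"
  proof
    assume "P = 0"
    then have "coeff P k = 0" by simp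
    then show False using cP[of k] k by simp
  qed
  have "degree P \<le> n - 1"
    by (rule degree_le) (auto simp: cP)
  then have deg: "degree P < n" using k by linarith
  have "x ` {..<n} \<subseteq> {r. poly P r = 0}" using roots by auto
  then have "card (x ` {..<n}) \<le> card {r. poly P r = 0}"
    by (intro card_mono poly_roots_finite P0)
  also have "\<dots> \<le> degree P" by (rule card_poly_roots_bound[OF P0])
  finally show False using deg card_image[OF inj] by simp
qed

lemma det_ne0_invertible:
  assumes A: "A \<in> carrier_mat n n" and d: "det A \<noteq> (0::'a::field)"
  shows "invertible_mat A"
proof -
  have "A \<in> Units (ring_mat TYPE('a) n ())" by (rule det_non_zero_imp_unit[OF A d])
  then obtain B where B: "B \<in> carrier_mat n n" "B * A = 1\<^sub>m n" "A * B = 1\<^sub>m n"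
    unfolding Units_def ring_mat_def by auto
  then show ?thesis using A unfolding invertible_mat_def inverts_mat_def square_mat.simps
    by auto
qed

lemma coef_ne0:
  assumes p: "p = CHAR('a::{finite,field})" and m: "m > 0" and e: "e < (p - 1) * m"
  shows "(of_nat (e div m + 1) :: 'a) \<noteq> 0"
proof -
  have "e div m < p - 1" using e by (simp add: less_mult_imp_div_less)
  then have "0 < e div m + 1" "e div m + 1 < CHAR('a)" using p by auto
  then show ?thesis by (rule of_nat_ne0_small)
qed

lemma main_inv:
  fixes w :: "nat \<Rightarrow> 'a::{finite,field}"
  assumes p: "p = CHAR('a)" and q: "card (UNIV::'a set) = m * p" and m: "m > 0"
    and cond: "(of_nat m::'a) = 0 \<or> p \<noteq> 2"
    and s: "s = (p - 1) * m"
    and inj: "inj_on w {..<s}" and nz: "\<And>i. i < s \<Longrightarrow> w i \<noteq> 0"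
  shows "invertible_mat (mat s s (\<lambda>(i,j). inverse (w i ^ m - w j ^ m)))"
proof -
  define M where "M = mat s s (\<lambda>(i,j). inverse (w i ^ m - w j ^ m))"
  define A where "A = mat s s (\<lambda>(i,e). w i ^ e)"
  define B where "B = mat s s (\<lambda>(e,j). - of_nat (e div m + 1) * inverse (w j) ^ (e+m) :: 'a)"
  have Ac: "A \<in> carrier_mat s s" and Bc: "B \<in> carrier_mat s s" and Mc: "M \<in> carrier_mat s s"
    by (simp_all add: A_def B_def M_def)
  have MAB: "M = A * B"
  proof (rule eq_matI)
    fix i j assume ij: "i < dim_row (A * B)" "j < dim_col (A * B)"
    then have i: "i < s" and j: "j < s" using Ac Bc by auto
    have "(A * B) $$ (i, j) = (\<Sum>e\<in>{0..<s}. w i ^ e * (- of_nat (e div m + 1) * inverse (w j) ^ (e+m)))"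
      using i j by (simp add: A_def B_def scalar_prod_def)
    also have "\<dots> = inverse (w i ^ m - w j ^ m)"
      unfolding atLeast0LessThan s
      by (rule entry_identity[OF p q m nz nz cond]) (use i j s in auto)
    finally show "M $$ (i, j) = (A * B) $$ (i, j)" using i j by (simp add: M_def)
  qed (use Ac Bc Mc in auto)
  have dA: "det A \<noteq> 0" unfolding A_def by (rule vand_det[OF inj])
  have dB: "det B \<noteq> 0"
  proof
    assume "det B = 0"
    then obtain c where c: "c \<in> carrier_vec s" "c \<noteq> 0\<^sub>v s" "B *\<^sub>v c = 0\<^sub>v s"
      using det_0_iff_vec_prod_zero_field[OF Bc] by auto
    define U where "U = mat s s (\<lambda>(j,e). inverse (w j) ^ e)"
    have Uc: "U \<in> carrier_mat s s" by (simp add: U_def)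
    have injU: "inj_on (\<lambda>j. inverse (w j)) {..<s}"
      using inj by (auto simp: inj_on_def)
    have dU: "det U \<noteq> 0" unfolding U_def by (rule vand_det[OF injU])
    have dUT: "det (transpose_mat U) \<noteq> 0" using dU det_transpose[OF Uc] by simp
    have UTc: "transpose_mat U \<in> carrier_mat s s" using Uc by simp
    define c' where "c' = vec s (\<lambda>j. inverse (w j) ^ m * c $ j)"
    have c'c: "c' \<in> carrier_vec s" by (simp add: c'_def)
    have "transpose_mat U *\<^sub>v c' = 0\<^sub>v s"
    proof (rule eq_vecI)
      fix e assume "e < dim_vec (0\<^sub>v s :: 'a vec)"
      then have e: "e < s" by simp
      have "(B *\<^sub>v c) $ e = 0" using c(3) e by simp
      then have "(\<Sum>j\<in>{0..<s}. (- of_nat (e div m + 1) * inverse (w j) ^ (e+m)) * c $ j) = 0"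
        using e c(1) by (simp add: B_def scalar_prod_def)
      then have h: "- of_nat (e div m + 1) * (\<Sum>j\<in>{0..<s}. inverse (w j) ^ (e+m) * c $ j) = 0"
        by (simp add: sum_distrib_left mult.assoc)
      have cf: "(of_nat (e div m + 1) :: 'a) \<noteq> 0"
        by (rule coef_ne0[OF p m]) (use e s in simp)
      have sum0: "(\<Sum>j\<in>{0..<s}. inverse (w j) ^ (e+m) * c $ j) = 0"
        using h cf by (metis mult_eq_0_iff neg_equal_0_iff_equal)
      have "(transpose_mat U *\<^sub>v c') $ e = (\<Sum>j\<in>{0..<s}. inverse (w j) ^ e * (inverse (w j) ^ m * c $ j))"
        using e by (simp add: U_def c'_def scalar_prod_def)
      also have "\<dots> = (\<Sum>j\<in>{0..<s}. inverse (w j) ^ (e+m) * c $ j)"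
        by (simp add: power_add mult.assoc)
      finally show "(transpose_mat U *\<^sub>v c') $ e = 0\<^sub>v s $ e" using sum0 e by simp
    qed (simp add: U_def)
    then have "c' = 0\<^sub>v s"
      using det_0_iff_vec_prod_zero_field[OF UTc] dUT c'c by auto
    then have "c = 0\<^sub>v s"
    proof -
      assume c'0: "c' = 0\<^sub>v s"
      show "c = 0\<^sub>v s"
      proof (rule eq_vecI)
        fix j assume "j < dim_vec (0\<^sub>v s :: 'a vec)"
        then have j: "j < s" by simp
        have "c' $ j = 0" using c'0 j by simp
        then have "inverse (w j) ^ m * c $ j = 0" using j by (simp add: c'_def)
        then show "c $ j = 0\<^sub>v s $ j" using nz[OF j] j by simp
      qed (use c(1) in simp)
    qed
    then show False using c(2) by simp
  qed
  have "det M = det A * det B" unfolding MAB by (rule det_mult[OF Ac Bc])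
  then have "det M \<noteq> 0" using dA dB by simp
  then show ?thesis using det_ne0_invertible[OF Mc] by (simp add: M_def)
qed

lemma minor_ne:
  fixes a1 a2 b1 b2 :: "'a::field"
  assumes a: "a1 \<noteq> a2" and b: "b1 \<noteq> b2"
  shows "inverse (a1 - b1) * inverse (a2 - b2) \<noteq> inverse (a1 - b2) * inverse (a2 - b1)"
proof
  assume eq: "inverse (a1 - b1) * inverse (a2 - b2) = inverse (a1 - b2) * inverse (a2 - b1)"
  show False
  proof (cases "a1 = b1 \<or> a2 = b2")
    case True
    then have "a1 - b2 \<noteq> 0" "a2 - b1 \<noteq> 0" using a b by auto
    then show False using eq True by auto
  next
    case False
    then have n1: "a1 - b1 \<noteq> 0" "a2 - b2 \<noteq> 0" by auto
    show False
    proof (cases "a1 = b2 \<or> a2 = b1")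
      case True
      then show False using eq n1 by auto
    next
      case False
      then have n2: "a1 - b2 \<noteq> 0" "a2 - b1 \<noteq> 0" by auto
      from eq have "(a1 - b2) * (a2 - b1) = (a1 - b1) * (a2 - b2)"
        using n1 n2 by (simp add: field_simps)
      then have "(a1 - a2) * (b1 - b2) = 0" by (simp add: algebra_simps)
      then show False using a b by simp
    qed
  qed
qed

lemma inv2:
  fixes A :: "'a::field mat"
  assumes A: "A \<in> carrier_mat 2 2" and d: "A $$ (0,0) * A $$ (1,1) \<noteq> A $$ (0,1) * A $$ (1,0)"
  shows "invertible_mat A"
proof (rule det_ne0_invertible[OF A])
  show "det A \<noteq> 0"
  proof
    assume "det A = 0"
    then obtain v where v: "v \<in> carrier_vec 2" "v \<noteq> 0\<^sub>v 2" "A *\<^sub>v v = 0\<^sub>v 2"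
      using det_0_iff_vec_prod_zero_field[OF A] by auto
    have "(A *\<^sub>v v) $ 0 = 0" "(A *\<^sub>v v) $ 1 = 0" using v(3) by auto
    then have e0: "A $$ (0,0) * v $ 0 + A $$ (0,1) * v $ 1 = 0"
      and e1: "A $$ (1,0) * v $ 0 + A $$ (1,1) * v $ 1 = 0"
      using A v(1) by (auto simp: scalar_prod_def numeral_2_eq_2 atLeast0LessThan lessThan_Suc add.commute)
    let ?D = "A $$ (0,0) * A $$ (1,1) - A $$ (0,1) * A $$ (1,0)"
    have "?D * v $ 0 = A $$ (1,1) * (A $$ (0,0) * v $ 0 + A $$ (0,1) * v $ 1) - A $$ (0,1) * (A $$ (1,0) * v $ 0 + A $$ (1,1) * v $ 1)"
      by (simp add: algebra_simps)
    then have "?D * v $ 0 = 0" using e0 e1 by simp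
    moreover have "?D * v $ 1 = A $$ (0,0) * (A $$ (1,0) * v $ 0 + A $$ (1,1) * v $ 1) - A $$ (1,0) * (A $$ (0,0) * v $ 0 + A $$ (0,1) * v $ 1)"
      by (simp add: algebra_simps)
    then have "?D * v $ 1 = 0" using e0 e1 by simp
    moreover have "?D \<noteq> 0" using d by simp
    ultimately have "v $ 0 = 0" "v $ 1 = 0" by auto
    then have "v = 0\<^sub>v 2" using v(1)
      by (intro eq_vecI) (auto simp: numeral_2_eq_2 less_Suc_eq)
    then show False using v(2) by simp
  qed
qed

lemma powm_inj:
  fixes x y :: "'a::{finite,field}"
  assumes q: "card (UNIV::'a set) = m * p" and e: "x ^ m = y ^ m"
  shows "x = y"
proof -
  have "x = x ^ (m * p)" using ff_pow_card[of x] q by simp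
  also have "\<dots> = (x ^ m) ^ p" by (simp add: power_mult)
  also have "\<dots> = (y ^ m) ^ p" using e by simp
  also have "\<dots> = y ^ (m * p)" by (simp add: power_mult)
  also have "\<dots> = y" using ff_pow_card[of y] q by simp
  finally show ?thesis .
qed


lemma pick01:
  assumes I: "I \<subseteq> {..<s}" "card I = 2"
  shows "pick I 0 \<in> I" "pick I 1 \<in> I" "pick I 0 < pick I 1" "pick I 0 < s" "pick I 1 < s"
    "card {i. i < s \<and> i \<in> I} = 2"
proof -
  have c: "0 < card I" "1 < card I" using I by auto
  show a: "pick I 0 \<in> I" "pick I 1 \<in> I" using pick_in_set c by blast+
  show "pick I 0 < pick I 1" using I by (intro pick_mono) auto
  show "pick I 0 < s" "pick I 1 < s" using a I by auto
  have "{i. i < s \<and> i \<in> I} = I" using I by auto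
  then show "card {i. i < s \<and> i \<in> I} = 2" using I by simp
qed

theorem theorem2p19:
  fixes q :: nat
  assumes "card (UNIV :: 'a set) = q"
  shows "\<exists>M :: 'a::{finite,field} mat. linear_AONT_matrix 2 (totient q) M"
proof -
  define p where "p = CHAR('a)"
  have pp: "prime p" unfolding p_def by (rule ff_prime_CHAR)
  then have p2: "p \<ge> 2" by (simp add: prime_ge_2_nat)
  obtain r where qr: "q = p ^ r" using ff_card_prime_power[where 'a='a] assms p_def by auto
  have q2: "q \<ge> 2" using ff_card_ge2[where 'a='a] assms by simp
  have r1: "r \<ge> 1" using q2 qr by (cases r) auto
  show ?thesis
  proof (cases "q = 2")
    case True
    then have t1: "totient q = 1" by simp
    have "linear_AONT_matrix 2 1 (1\<^sub>m 1 :: 'a mat)"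
      unfolding linear_AONT_matrix_def
    proof (intro conjI allI impI)
      show "invertible_mat (1\<^sub>m 1 :: 'a mat)"
        unfolding invertible_mat_def inverts_mat_def by (auto intro!: exI[of _ "1\<^sub>m 1"])
      fix I J :: "nat set" assume "I \<subseteq> {..<1} \<and> J \<subseteq> {..<1} \<and> card I = 2 \<and> card J = 2"
      then have "card I \<le> card {..<1::nat}" "card I = 2" using card_mono[of "{..<1::nat}" I] by auto
      then have False by simp
      then show "invertible_mat (submatrix (1\<^sub>m 1) I J :: 'a mat)" by simp
    qed simp
    then show ?thesis using t1 by auto
  next
    case False
    define m where "m = p ^ (r - 1)"
    have m0: "m > 0" using p2 by (simp add: m_def)
    have qm: "card (UNIV::'a set) = m * p" using assms qr r1
      by (simp add: m_def power_Suc2[symmetric] del: power_Suc2)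
    have cond: "(of_nat m::'a) = 0 \<or> p \<noteq> 2"
    proof (cases "r = 1")
      case True then show ?thesis using False qr by simp
    next
      case False
      then have "p dvd m" using r1 by (simp add: m_def)
      then show ?thesis by (simp add: p_def of_nat_eq_0_iff_char_dvd)
    qed
    define s where "s = (p - 1) * m"
    have ts: "totient q = s"
      using totient_prime_power[OF pp, of r] r1 qr by (simp add: s_def m_def mult.commute)
    have sq: "s \<le> q - 1"
    proof -
      have "s = m * p - m" by (simp add: s_def algebra_simps)
      then show ?thesis using qm assms m0 by simp
    qed
    have cardnz: "card (UNIV - {0::'a}) = q - 1" using assms by (simp add: card_Diff_singleton)
    obtain h where h: "bij_betw h {0..<card (UNIV - {0::'a})} (UNIV - {0::'a})"
      using ex_bij_betw_nat_finite[of "UNIV - {0::'a}"] by auto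
    have injh: "inj_on h {..<s}"
      by (rule inj_on_subset[OF bij_betw_imp_inj_on[OF h]]) (use sq cardnz in auto)
    have nzh: "h i \<noteq> 0" if "i < s" for i
      using bij_betwE[OF h] that sq cardnz by auto
    define M where "M = mat s s (\<lambda>(i,j). inverse (h i ^ m - h j ^ m))"
    have Mc: "M \<in> carrier_mat s s" by (simp add: M_def)
    have Minv: "invertible_mat M"
      unfolding M_def by (rule main_inv[OF p_def qm m0 cond s_def injh nzh])
    have distm: "h i ^ m \<noteq> h j ^ m" if "i < s" "j < s" "i \<noteq> j" for i j
    proof
      assume "h i ^ m = h j ^ m"
      then have "h i = h j" by (rule powm_inj[OF qm])
      then show False using injh that by (auto dest: inj_onD)
    qed
    have "linear_AONT_matrix 2 s M"
      unfolding linear_AONT_matrix_def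
    proof (intro conjI allI impI)
      fix I J :: "nat set" assume IJ: "I \<subseteq> {..<s} \<and> J \<subseteq> {..<s} \<and> card I = 2 \<and> card J = 2"
      then have I: "I \<subseteq> {..<s}" "card I = 2" and J: "J \<subseteq> {..<s}" "card J = 2" by auto
      note pI = pick01[OF I] and pJ = pick01[OF J]
      define S where "S = submatrix M I J"
      have dS: "dim_row S = 2" "dim_col S = 2"
        using pI(6) pJ(6) Mc by (simp_all add: S_def dim_submatrix)
      have Sc: "S \<in> carrier_mat 2 2" using dS by auto
      have Sij: "S $$ (k, l) = inverse (h (pick I k) ^ m - h (pick J l) ^ m)" if "k < 2" "l < 2" for k l
      proof -
        have "pick I k < s" "pick J l < s" using that pI pJ by (auto simp: less_2_cases_iff)
        moreover have "S $$ (k, l) = M $$ (pick I k, pick J l)"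
          unfolding S_def using that pI(6) pJ(6) Mc by (intro submatrix_index) auto
        ultimately show ?thesis by (simp add: M_def)
      qed
      show "invertible_mat (submatrix M I J)"
        unfolding S_def[symmetric]
      proof (rule inv2[OF Sc])
        show "S $$ (0,0) * S $$ (1,1) \<noteq> S $$ (0,1) * S $$ (1,0)"
        proof -
          have s00: "S $$ (0,0) = inverse (h (pick I 0) ^ m - h (pick J 0) ^ m)" by (rule Sij) simp_all
          have s11: "S $$ (1,1) = inverse (h (pick I 1) ^ m - h (pick J 1) ^ m)" by (rule Sij) simp_all
          have s01: "S $$ (0,1) = inverse (h (pick I 0) ^ m - h (pick J 1) ^ m)" by (rule Sij) simp_all
          have s10: "S $$ (1,0) = inverse (h (pick I 1) ^ m - h (pick J 0) ^ m)" by (rule Sij) simp_all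
          have dI: "h (pick I 0) ^ m \<noteq> h (pick I 1) ^ m" using distm[OF pI(4) pI(5)] pI(3) by simp
          have dJ: "h (pick J 0) ^ m \<noteq> h (pick J 1) ^ m" using distm[OF pJ(4) pJ(5)] pJ(3) by simp
          show ?thesis unfolding s00 s11 s01 s10 by (rule minor_ne[OF dI dJ])
        qed
      qed
    qed (use Mc Minv in auto)
    then show ?thesis using ts by auto
  qed
qed

end
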